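(* Let $\kappa$ be a fixed grounding calculus. If a grounding tree $\Gamma[\Delta]\blacktriangleright A$ corresponds to a legitimate grounding derivation in $\kappa$, then $\Gamma[\Delta]\blacktriangleright A$ is derivable from the hypotheses $\Gamma,\Delta$ in any calculus that contains the rules of $\kappa$, the rules for the immediate grounding operator $\blacktriangleright$, and the rules for the grounding tree operator $\triangleright$.
   Context: A grounding calculus $\kappa$ is a natural-deduction system whose grounding rules have the form: from premisses $A_1,\dots,A_n$ (the ground) and a possibly empty list of premisses $[C_1,\dots,C_m]$ (the conditions) infer $B$. A grounding derivation is a derivation constructed by exclusively applying grounding rules of $\kappa$ to a set of consistent hypotheses and containing at least one rule application. Language: formulae are built from propositional variables with $\bot,\neg,\wedge,\vee,\to$, and immediate grounding formulae $\Gamma[\Delta]\blacktriangleright A$, where $\Gamma,\Delta$ are finite lists ($\Delta$ possibly empty) whose elements are either formulae or expressions $(\Theta[\Sigma])\triangleright B$, where $B$ is a formula and $\Theta,\Sigma$ are again such lists (so $\triangleright$ can be nested arbitrarily); an expression $(\Theta[\Sigma])\triangleright B$ is not itself a formula. A grounding tree is a formula $\Gamma[\Delta]\blacktriangleright A$; when no element of $\Gamma,\Delta$ has the form $(\cdot)\triangleright\cdot$ it is an immediate grounding claim. Rules for $\blacktriangleright$: Introduction: immediately below an application of a grounding rule of $\kappa$ with premisses $A_1,\dots,A_n,[C_1,\dots,C_m]$ and conclusion $B$, infer $A_1,\dots,A_n[C_1,\dots,C_m]\blacktriangleright B$. Eliminations: from $\Gamma[\Delta]\blacktriangleright B$ infer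 $B$, and infer any element of $\Gamma$ or of $\Delta$ whose outermost operator is not $\triangleright$; from $A_1,\dots,A_n[C_1,\dots,C_m]\blacktriangleright B$ infer $\bot$ whenever there is no grounding rule application with those premisses and conclusion. Rules for $\triangleright$: Introductions: from $\Delta[\Theta]\blacktriangleright A$ and $\Gamma_1,A,\Gamma_2[\Xi]\blacktriangleright B$ infer $\Gamma_1,(\Delta[\Theta])\triangleright A,\Gamma_2[\Xi]\blacktriangleright B$; from $\Delta[\Theta]\blacktriangleright C$ and $\Gamma[\Xi_1,C,\Xi_2]\blacktriangleright B$ infer $\Gamma[\Xi_1,(\Delta[\Theta])\triangleright C,\Xi_2]\blacktriangleright B$. Eliminations: from $\Gamma_1,(\Delta[\Theta])\triangleright A,\Gamma_2[\Xi]\blacktriangleright B$ infer $\Delta[\Theta]\blacktriangleright A$ and $\Gamma_1,A,\Gamma_2[\Xi]\blacktriangleright B$; from $\Gamma[\Xi_1,(\Delta[\Theta])\triangleright C,\Xi_2]\blacktriangleright B$ infer $\Delta[\Theta]\blacktriangleright C$ and $\Gamma[\Xi_1,C,\Xi_2]\blacktriangleright B$. Correspondence: a grounding tree $G_1,\dots,G_m[G_{m+1},\dots,G_n]\blacktriangleright A$ (or an expression $(G_1,\dots,G_m[G_{m+1},\dots,G_n])\triangleright A$) corresponds to a grounding derivation $\delta$ iff the root of $\delta$ is $A$, the last rule application $r$ of $\delta$ has $n$ premisses, the first $m$ of which are grounds and the rest conditions, and for each $i$: if $G_i$ does not have the form $(\cdot)\triangleright\cdot$ then the $i$-th premiss of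 $r$ is $G_i$, and if $G_i$ has the form $(\cdot)\triangleright\cdot$ then the grounding derivation of the $i$-th premiss of $r$ corresponds to $G_i$. *)

theory Defs
  imports Main
begin

text \<open>An element is either a formula (F A) or an expression (Theta[Sigma]) |> B,
  written T Theta Sigma B. The formula Gr Gamma Delta A is Gamma[Delta] >> A.\<close>

datatype form =
    PVar nat
  | Bot
  | Neg form
  | Conj form form
  | Disj form form
  | Imp form form
  | Gr "elem list" "elem list" form
and elem =
    F form
  | T "elem list" "elem list" form

definition imm :: "form list \<Rightarrow> form list \<Rightarrow> form \<Rightarrow> form" where
  "imm As Cs B = Gr (map F As) (map F Cs) B"

text \<open>A grounding calculus is given by the set of its admissible grounding
  rule applications (grounds, conditions, conclusion).\<close>
type_synonym gcalc = "(form list \<times> form list \<times> form) set"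

text \<open>Derivation trees built only from grounding rule applications:
  a leaf is a hypothesis; App ds cs B applies a rule with the grounds derived
  by ds, the conditions derived by cs, and conclusion B.\<close>
datatype gder = Hyp form | App "gder list" "gder list" form

primrec root :: "gder \<Rightarrow> form" where
  "root (Hyp A) = A"
| "root (App ds cs B) = B"

primrec leaves :: "gder \<Rightarrow> form set" where
  "leaves (Hyp A) = {A}"
| "leaves (App ds cs B) = \<Union> (set (map leaves ds)) \<union> \<Union> (set (map leaves cs))"

inductive wf_gder :: "gcalc \<Rightarrow> gder \<Rightarrow> bool" for \<kappa> where
  hyp: "wf_gder \<kappa> (Hyp A)"
| app: "\<lbrakk> (map root ds, map root cs, B) \<in> \<kappa>;
          \<forall>d\<in>set ds. wf_gder \<kappa> d; \<forall>c\<in>set cs. wf_gder \<kappa> c \<rbrakk>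
        \<Longrightarrow> wf_gder \<kappa> (App ds cs B)"

text \<open>The notion of consistency is left as a parameter (cons).\<close>
definition grounding_derivation :: "gcalc \<Rightarrow> (form set \<Rightarrow> bool) \<Rightarrow> gder \<Rightarrow> bool" where
  "grounding_derivation \<kappa> cons \<delta> \<longleftrightarrow>
     wf_gder \<kappa> \<delta> \<and> (\<exists>ds cs B. \<delta> = App ds cs B) \<and> cons (leaves \<delta>)"

inductive corr :: "elem list \<Rightarrow> elem list \<Rightarrow> form \<Rightarrow> gder \<Rightarrow> bool"
  and corr_el :: "elem \<Rightarrow> gder \<Rightarrow> bool" where
  corr_app: "\<lbrakk> length ds = length \<Gamma>; length cs = length \<Delta>;
               \<forall>i<length \<Gamma>. corr_el (\<Gamma> ! i) (ds ! i);
               \<forall>i<length \<Delta>. corr_el (\<Delta> ! i) (cs ! i) \<rbrakk>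
             \<Longrightarrow> corr \<Gamma> \<Delta> A (App ds cs A)"
| corr_form: "root d = X \<Longrightarrow> corr_el (F X) d"
| corr_tree: "corr \<Theta> \<Sigma> B d \<Longrightarrow> corr_el (T \<Theta> \<Sigma> B) d"

primrec el_hyps :: "elem \<Rightarrow> form set" where
  "el_hyps (F A) = {A}"
| "el_hyps (T \<Theta> \<Sigma> B) = \<Union> (set (map el_hyps \<Theta>)) \<union> \<Union> (set (map el_hyps \<Sigma>))"

definition tree_hyps :: "elem list \<Rightarrow> elem list \<Rightarrow> form set" where
  "tree_hyps \<Gamma> \<Delta> = \<Union> (set (map el_hyps \<Gamma>)) \<union> \<Union> (set (map el_hyps \<Delta>))"

text \<open>A calculus is represented by its derivability relation D Hs A
  (A derivable from hypotheses Hs). closed_calc kappa D says that D contains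
  the hypothesis rule, the rules of kappa, and the introduction/elimination
  rules for >> and |>.\<close>
definition closed_calc :: "gcalc \<Rightarrow> (form set \<Rightarrow> form \<Rightarrow> bool) \<Rightarrow> bool" where
  "closed_calc \<kappa> D \<longleftrightarrow>
     (\<forall>Hs A. A \<in> Hs \<longrightarrow> D Hs A)
   \<and> (\<forall>Hs As Cs B. (As, Cs, B) \<in> \<kappa> \<longrightarrow> (\<forall>a\<in>set As. D Hs a) \<longrightarrow> (\<forall>c\<in>set Cs. D Hs c)
        \<longrightarrow> D Hs B)
   \<comment> \<open>>> introduction, immediately below an application of a grounding rule\<close>
   \<and> (\<forall>Hs As Cs B. (As, Cs, B) \<in> \<kappa> \<longrightarrow> (\<forall>a\<in>set As. D Hs a) \<longrightarrow> (\<forall>c\<in>set Cs. D Hs c)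
        \<longrightarrow> D Hs (imm As Cs B))
   \<comment> \<open>>> eliminations\<close>
   \<and> (\<forall>Hs \<Gamma> \<Delta> B. D Hs (Gr \<Gamma> \<Delta> B) \<longrightarrow> D Hs B)
   \<and> (\<forall>Hs \<Gamma> \<Delta> B X. D Hs (Gr \<Gamma> \<Delta> B) \<longrightarrow> F X \<in> set \<Gamma> \<union> set \<Delta> \<longrightarrow> D Hs X)
   \<and> (\<forall>Hs As Cs B. (As, Cs, B) \<notin> \<kappa> \<longrightarrow> D Hs (imm As Cs B) \<longrightarrow> D Hs Bot)
   \<comment> \<open>|> introductions\<close>
   \<and> (\<forall>Hs \<Delta> \<Theta> A \<Gamma>1 \<Gamma>2 \<Xi> B. D Hs (Gr \<Delta> \<Theta> A) \<longrightarrow> D Hs (Gr (\<Gamma>1 @ F A # \<Gamma>2) \<Xi> B)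
        \<longrightarrow> D Hs (Gr (\<Gamma>1 @ T \<Delta> \<Theta> A # \<Gamma>2) \<Xi> B))
   \<and> (\<forall>Hs \<Delta> \<Theta> C \<Gamma> \<Xi>1 \<Xi>2 B. D Hs (Gr \<Delta> \<Theta> C) \<longrightarrow> D Hs (Gr \<Gamma> (\<Xi>1 @ F C # \<Xi>2) B)
        \<longrightarrow> D Hs (Gr \<Gamma> (\<Xi>1 @ T \<Delta> \<Theta> C # \<Xi>2) B))
   \<comment> \<open>|> eliminations\<close>
   \<and> (\<forall>Hs \<Delta> \<Theta> A \<Gamma>1 \<Gamma>2 \<Xi> B. D Hs (Gr (\<Gamma>1 @ T \<Delta> \<Theta> A # \<Gamma>2) \<Xi> B)
        \<longrightarrow> D Hs (Gr \<Delta> \<Theta> A) \<and> D Hs (Gr (\<Gamma>1 @ F A # \<Gamma>2) \<Xi> B))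
   \<and> (\<forall>Hs \<Delta> \<Theta> C \<Gamma> \<Xi>1 \<Xi>2 B. D Hs (Gr \<Gamma> (\<Xi>1 @ T \<Delta> \<Theta> C # \<Xi>2) B)
        \<longrightarrow> D Hs (Gr \<Delta> \<Theta> C) \<and> D Hs (Gr \<Gamma> (\<Xi>1 @ F C # \<Xi>2) B))"

end

theory Submission
  imports Defs
begin

lemma introG: "closed_calc \<kappa> D \<Longrightarrow> D Hs (Gr Dd Th A) \<Longrightarrow> D Hs (Gr (G1 @ F A # G2) X B)
        \<Longrightarrow> D Hs (Gr (G1 @ T Dd Th A # G2) X B)"
  unfolding closed_calc_def
  apply (drule conjunct2, drule conjunct2, drule conjunct2, drule conjunct2, drule conjunct2, drule conjunct2, drule conjunct1)
  apply (erule allE[of _ Hs], erule allE[of _ Dd], erule allE[of _ Th], erule allE[of _ A], erule allE[of _ G1], erule allE[of _ G2], erule allE[of _ X], erule allE[of _ B])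
  by blast
lemma introD: "closed_calc \<kappa> D \<Longrightarrow> D Hs (Gr Dd Th C) \<Longrightarrow> D Hs (Gr G (X1 @ F C # X2) B)
        \<Longrightarrow> D Hs (Gr G (X1 @ T Dd Th C # X2) B)"
  unfolding closed_calc_def
  apply (drule conjunct2, drule conjunct2, drule conjunct2, drule conjunct2, drule conjunct2, drule conjunct2, drule conjunct2, drule conjunct1)
  apply (erule allE[of _ Hs], erule allE[of _ Dd], erule allE[of _ Th], erule allE[of _ C], erule allE[of _ G], erule allE[of _ X1], erule allE[of _ X2], erule allE[of _ B])
  by blast
lemma hypR: "closed_calc \<kappa> D \<Longrightarrow> A \<in> Hs \<Longrightarrow> D Hs A"
  unfolding closed_calc_def by (drule conjunct1) blast
lemma immR: "closed_calc \<kappa> D \<Longrightarrow> (As, Cs, B) \<in> \<kappa> \<Longrightarrow> \<forall>a\<in>set As. D Hs a \<Longrightarrow> \<forall>c\<in>set Cs. D Hs c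
   \<Longrightarrow> D Hs (imm As Cs B)"
  unfolding closed_calc_def
  apply (drule conjunct2, drule conjunct2, drule conjunct1)
  apply (erule allE[of _ Hs], erule allE[of _ As], erule allE[of _ Cs], erule allE[of _ B])
  by blast
lemma elimR: "closed_calc \<kappa> D \<Longrightarrow> D Hs (Gr G Dl B) \<Longrightarrow> D Hs B"
  unfolding closed_calc_def
  apply (drule conjunct2, drule conjunct2, drule conjunct2, drule conjunct1)
  apply (erule allE[of _ Hs], erule allE[of _ G], erule allE[of _ Dl], erule allE[of _ B])
  by blast

definition matchE :: "(form set \<Rightarrow> form \<Rightarrow> bool) \<Rightarrow> form set \<Rightarrow> elem \<Rightarrow> form \<Rightarrow> bool" where
  "matchE D Hs e x \<longleftrightarrow> e = F x \<or> (\<exists>\<Theta> \<Sigma>. e = T \<Theta> \<Sigma> x \<and> D Hs (Gr \<Theta> \<Sigma> x))"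

lemma repl_G:
  assumes c: "closed_calc \<kappa> D"
  shows "list_all2 (matchE D Hs) G xs \<Longrightarrow> D Hs (Gr (pre @ map F xs) Dl A) \<Longrightarrow> D Hs (Gr (pre @ G) Dl A)"
proof (induction G xs arbitrary: pre rule: list_all2_induct)
  case Nil then show ?case by simp
next
  case (Cons e Gr' x xr)
  have "D Hs (Gr (pre @ e # map F xr) Dl A)"
  proof (cases "e = F x")
    case True then show ?thesis using Cons by simp
  next
    case False
    then obtain \<Theta> \<Sigma> where e: "e = T \<Theta> \<Sigma> x" "D Hs (Gr \<Theta> \<Sigma> x)" using Cons(1) unfolding matchE_def by blast
    have h: "D Hs (Gr (pre @ F x # map F xr) Dl A)" using Cons by simp
    show ?thesis using introG[OF c e(2) h] e(1) by simp
  qed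
  then have "D Hs (Gr ((pre @ [e]) @ map F xr) Dl A)" by simp
  from Cons.IH[OF this] show ?case by simp
qed

lemma repl_D:
  assumes c: "closed_calc \<kappa> D"
  shows "list_all2 (matchE D Hs) G xs \<Longrightarrow> D Hs (Gr Gl (pre @ map F xs) A) \<Longrightarrow> D Hs (Gr Gl (pre @ G) A)"
proof (induction G xs arbitrary: pre rule: list_all2_induct)
  case Nil then show ?case by simp
next
  case (Cons e Gr' x xr)
  have "D Hs (Gr Gl (pre @ e # map F xr) A)"
  proof (cases "e = F x")
    case True then show ?thesis using Cons by simp
  next
    case False
    then obtain \<Theta> \<Sigma> where e: "e = T \<Theta> \<Sigma> x" "D Hs (Gr \<Theta> \<Sigma> x)" using Cons(1) unfolding matchE_def by blast
    have h: "D Hs (Gr Gl (pre @ F x # map F xr) A)" using Cons by simp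
    show ?thesis using introD[OF c e(2) h] e(1) by simp
  qed
  then have "D Hs (Gr Gl ((pre @ [e]) @ map F xr) A)" by simp
  from Cons.IH[OF this] show ?case by simp
qed

lemma main_aux:
  assumes c: "closed_calc \<kappa> D"
  shows "corr G Dl A d \<Longrightarrow> wf_gder \<kappa> d \<Longrightarrow> tree_hyps G Dl \<subseteq> Hs \<Longrightarrow> D Hs (Gr G Dl A)"
    and "corr_el e d \<Longrightarrow> wf_gder \<kappa> d \<Longrightarrow> el_hyps e \<subseteq> Hs \<Longrightarrow>
           D Hs (root d) \<and> matchE D Hs e (root d)"
proof (induction rule: corr_corr_el.inducts)
  case (corr_app ds \<Gamma> cs \<Delta> A)
  from corr_app.prems(1) have k: "(map root ds, map root cs, A) \<in> \<kappa>"
    and wd: "\<forall>d\<in>set ds. wf_gder \<kappa> d" and wc: "\<forall>c\<in>set cs. wf_gder \<kappa> c"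
    by (auto elim: wf_gder.cases)
  have hG: "\<And>i. i < length \<Gamma> \<Longrightarrow> el_hyps (\<Gamma> ! i) \<subseteq> Hs"
    using corr_app.prems(2) unfolding tree_hyps_def by (auto dest!: nth_mem)
  have hD: "\<And>i. i < length \<Delta> \<Longrightarrow> el_hyps (\<Delta> ! i) \<subseteq> Hs"
    using corr_app.prems(2) unfolding tree_hyps_def by (auto dest!: nth_mem)
  have rG: "\<And>i. i < length \<Gamma> \<Longrightarrow> D Hs (root (ds ! i)) \<and> matchE D Hs (\<Gamma> ! i) (root (ds ! i))"
    using corr_app.IH(1) hG wd corr_app.hyps(1) by (metis nth_mem)
  have rD: "\<And>i. i < length \<Delta> \<Longrightarrow> D Hs (root (cs ! i)) \<and> matchE D Hs (\<Delta> ! i) (root (cs ! i))"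
    using corr_app.IH(2) hD wc corr_app.hyps(2) by (metis nth_mem)
  have a1: "\<forall>a\<in>set (map root ds). D Hs a"
  proof
    fix a assume "a \<in> set (map root ds)"
    then obtain i where "i < length ds" "a = root (ds ! i)" by (auto simp: in_set_conv_nth)
    then show "D Hs a" using rG corr_app.hyps(1) by simp
  qed
  have a2: "\<forall>a\<in>set (map root cs). D Hs a"
  proof
    fix a assume "a \<in> set (map root cs)"
    then obtain i where "i < length cs" "a = root (cs ! i)" by (auto simp: in_set_conv_nth)
    then show "D Hs a" using rD corr_app.hyps(2) by simp
  qed
  have "D Hs (imm (map root ds) (map root cs) A)"
    using immR[OF c k a1 a2] .
  then have s0: "D Hs (Gr ([] @ map F (map root ds)) ([] @ map F (map root cs)) A)"
    by (simp add: imm_def)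
  have l1: "list_all2 (matchE D Hs) \<Gamma> (map root ds)"
    using rG corr_app.hyps(1) by (simp add: list_all2_conv_all_nth)
  have l2: "list_all2 (matchE D Hs) \<Delta> (map root cs)"
    using rD corr_app.hyps(2) by (simp add: list_all2_conv_all_nth)
  have "D Hs (Gr ([] @ \<Gamma>) ([] @ map F (map root cs)) A)"
    by (rule repl_G[OF c l1 s0])
  then have "D Hs (Gr \<Gamma> ([] @ map F (map root cs)) A)" by simp
  from repl_D[OF c l2 this] show ?case by simp
next
  case (corr_form d X)
  then show ?case using hypR[OF c] unfolding matchE_def by auto
next
  case (corr_tree \<Theta> \<Sigma> B d)
  have tr: "tree_hyps \<Theta> \<Sigma> \<subseteq> Hs" using corr_tree.prems unfolding tree_hyps_def by simp
  have g: "D Hs (Gr \<Theta> \<Sigma> B)" using corr_tree.IH corr_tree.prems(1) tr by blast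
  have r: "root d = B" using corr_tree.hyps by (auto elim: corr.cases)
  have "D Hs B" using elimR[OF c g] .
  then show ?case using g r unfolding matchE_def by auto
qed

theorem mainTheorem2:
  fixes \<kappa> :: gcalc and cons :: "form set \<Rightarrow> bool" and \<delta> :: gder
    and D :: "form set \<Rightarrow> form \<Rightarrow> bool"
  assumes "grounding_derivation \<kappa> cons \<delta>"
    and "corr \<Gamma> \<Delta> A \<delta>"
    and "closed_calc \<kappa> D"
  shows "D (tree_hyps \<Gamma> \<Delta>) (Gr \<Gamma> \<Delta> A)"
  using main_aux(1)[OF assms(3) assms(2)] assms(1) unfolding grounding_derivation_def by blast

end
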